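(* Let $(\Omega,\mathcal F)$ be a measurable space with $\Sigma\neq\emptyset$, $\nu$ a finite measure on it, and $\mu$ a finite measure with $\mu\ll\nu$. Let $F_\mu(y)=\nu(\{\omega: \frac{d\mu}{d\nu}(\omega)\le y\})$ for $y\ge0$ and $v_\mu(A)=\int_0^\infty\min(\nu(\Omega)-F_\mu(z),\nu(A))\,dz$ for $A\in\mathcal F$. Then: (1) $v_\mu$ is non-decreasing, continuous, submodular, and $v_\mu(\emptyset)=0$; (2) $v_\mu(\{\omega:\frac{d\mu}{d\nu}(\omega)>y\})=\mu(\{\omega:\frac{d\mu}{d\nu}(\omega)>y\})$ for all $y\ge0$; (3) for every non-negative measurable $f:\Omega\to[0,\infty)$, with $v_\mu(f)=\int_0^\infty v_\mu(\{\omega: f(\omega)>z\})\,dz$, $$v_\mu(f)\ge\sup\Big\{\int_\Omega f\,d\mu'\ \Big|\ \mu'\text{ a finite measure},\ \mu'\ll\nu,\ F_{\mu'}=F_\mu\Big\};$$ in particular $v_\mu(A)\ge\sup\{\mu'(A)\mid \mu'\text{ finite measure},\ \mu'\ll\nu,\ F_{\mu'}=F_\mu\}$ for all $A\in\mathcal F$.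
   Context: $\Sigma$ denotes the set of all classes $\mathcal I\subset\mathcal F$ that are chains (totally ordered by inclusion), contain $\emptyset$ and $\Omega$, and generate $\mathcal F$ as a $\sigma$-algebra. $\frac{d\mu}{d\nu}$ is the (non-negative) Radon–Nikodym derivative. $v$ is non-decreasing if $v(A)\le v(B)$ for $A\subset B$; submodular if $v(A)+v(B)\ge v(A\cup B)+v(A\cap B)$. For $\mathcal I\in\Sigma$ let $\mathcal J$ be the algebra generated by $\mathcal I$, whose elements are the sets $\bigcup_{i=1}^n (C_i\cap D_i^c)$ with $C_1\supset D_1\supset\cdots\supset C_n\supset D_n$ in $\mathcal I$; define $\mu_{v,\mathcal I}(\bigcup_{i=1}^n (C_i\cap D_i^c))=\sum_{i=1}^n(v(C_i)-v(D_i))$. A non-decreasing $v$ is continuous if for every $\mathcal I\in\Sigma$ this $\mu_{v,\mathcal I}$ is $\sigma$-additive on $\mathcal J$. $F_{\mu'}$ is defined from $\mu'$ in the same way as $F_\mu$. *)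

theory Defs
  imports "HOL-Probability.Probability"
begin

definition Sigma_cls :: "'a measure \<Rightarrow> 'a set set set" where
  "Sigma_cls M = {I. I \<subseteq> sets M \<and> (\<forall>A\<in>I. \<forall>B\<in>I. A \<subseteq> B \<or> B \<subseteq> A)
       \<and> {} \<in> I \<and> space M \<in> I \<and> sigma_sets (space M) I = sets M}"

definition chain_rep :: "'a set set \<Rightarrow> nat \<Rightarrow> (nat \<Rightarrow> 'a set) \<Rightarrow> (nat \<Rightarrow> 'a set) \<Rightarrow> bool" where
  "chain_rep I n C D \<longleftrightarrow> (\<forall>i<n. C i \<in> I \<and> D i \<in> I \<and> D i \<subseteq> C i)
      \<and> (\<forall>i. Suc i < n \<longrightarrow> C (Suc i) \<subseteq> D i)"

definition alg_gen :: "'a set set \<Rightarrow> 'a set set" where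
  "alg_gen I = {A. \<exists>n C D. chain_rep I n C D \<and> A = (\<Union>i<n. C i - D i)}"

definition mu_vI :: "('a set \<Rightarrow> real) \<Rightarrow> 'a set set \<Rightarrow> 'a set \<Rightarrow> real" where
  "mu_vI v I A = (SOME s. \<exists>n C D. chain_rep I n C D \<and> A = (\<Union>i<n. C i - D i)
                      \<and> s = (\<Sum>i<n. v (C i) - v (D i)))"

definition sigma_additive_on :: "'a set set \<Rightarrow> ('a set \<Rightarrow> real) \<Rightarrow> bool" where
  "sigma_additive_on J m \<longleftrightarrow> (\<forall>A :: nat \<Rightarrow> 'a set. range A \<subseteq> J \<longrightarrow> disjoint_family A
      \<longrightarrow> (\<Union>n. A n) \<in> J \<longrightarrow> (\<lambda>n. m (A n)) sums m (\<Union>n. A n))"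

definition nondecreasing_cap :: "'a measure \<Rightarrow> ('a set \<Rightarrow> real) \<Rightarrow> bool" where
  "nondecreasing_cap M v \<longleftrightarrow> (\<forall>A\<in>sets M. \<forall>B\<in>sets M. A \<subseteq> B \<longrightarrow> v A \<le> v B)"

definition submodular_cap :: "'a measure \<Rightarrow> ('a set \<Rightarrow> real) \<Rightarrow> bool" where
  "submodular_cap M v \<longleftrightarrow> (\<forall>A\<in>sets M. \<forall>B\<in>sets M. v A + v B \<ge> v (A \<union> B) + v (A \<inter> B))"

definition continuous_cap :: "'a measure \<Rightarrow> ('a set \<Rightarrow> real) \<Rightarrow> bool" where
  "continuous_cap M v \<longleftrightarrow> (\<forall>I\<in>Sigma_cls M. sigma_additive_on (alg_gen I) (mu_vI v I))"

text \<open>F_mu(y) = nu({dmu/dnu <= y}); here M plays the role of nu.\<close>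
definition Fdist :: "'a measure \<Rightarrow> 'a measure \<Rightarrow> real \<Rightarrow> real" where
  "Fdist M \<mu> y = measure M {\<omega>\<in>space M. RN_deriv M \<mu> \<omega> \<le> ennreal y}"

definition v_mu :: "'a measure \<Rightarrow> 'a measure \<Rightarrow> 'a set \<Rightarrow> real" where
  "v_mu M \<mu> A = (\<integral>z\<in>{0..}. min (measure M (space M) - Fdist M \<mu> z) (measure M A) \<partial>lborel)"

definition v_fun :: "'a measure \<Rightarrow> ('a set \<Rightarrow> real) \<Rightarrow> ('a \<Rightarrow> real) \<Rightarrow> ennreal" where
  "v_fun M v f = (\<integral>\<^sup>+ z\<in>{0..}. ennreal (v {\<omega>\<in>space M. f \<omega> > z}) \<partial>lborel)"

definition same_F_measures :: "'a measure \<Rightarrow> 'a measure \<Rightarrow> 'a measure set" where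
  "same_F_measures M \<mu> = {\<mu>'. sets \<mu>' = sets M \<and> finite_measure \<mu>' \<and> absolutely_continuous M \<mu>'
       \<and> (\<forall>y\<ge>0. Fdist M \<mu>' y = Fdist M \<mu> y)}"

end

theory Submission
  imports Defs
begin


lemma emeasure_lborel_Ici0: "emeasure lborel {(0::real)..} = \<infinity>"
proof (rule ccontr)
  assume "emeasure lborel {(0::real)..} \<noteq> \<infinity>"
  then obtain r where r: "emeasure lborel {(0::real)..} = ennreal r" "r \<ge> 0"
    by (cases "emeasure lborel {(0::real)..}") auto
  have "emeasure lborel {0..r+1} \<le> emeasure lborel {(0::real)..}"
    by (intro emeasure_mono) auto
  then have "ennreal (r+1) \<le> ennreal r" using r by simp
  then show False using r by (simp add: ennreal_le_iff)
qed

lemma lborel_below: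
  fixes e :: ennreal
  shows "emeasure lborel ({(0::real)..} \<inter> {z. ennreal z < e}) = e"
proof (cases e)
  case (real r)
  have "{(0::real)..} \<inter> {z. ennreal z < e} = {0..<r}"
    using real by (auto simp: ennreal_less_iff)
  then show ?thesis using real by simp
next
  case top
  then have "{(0::real)..} \<inter> {z. ennreal z < e} = {0..}" by auto
  then show ?thesis using top emeasure_lborel_Ici0 by simp
qed

lemma layer_cake:
  assumes "sigma_finite_measure N" and h[measurable]: "h \<in> borel_measurable N"
  shows "(\<integral>\<^sup>+\<omega>. h \<omega> \<partial>N) =
     (\<integral>\<^sup>+z. indicator {0..} z * emeasure N {\<omega>\<in>space N. ennreal z < h \<omega>} \<partial>lborel)"
proof -
  interpret N: sigma_finite_measure N by fact
  interpret P: pair_sigma_finite lborel N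
    by (simp add: N.sigma_finite_measure_axioms lborel.sigma_finite_measure_axioms pair_sigma_finite.intro)
  let ?f = "\<lambda>(z::real) \<omega>. indicator {0..} z * indicator {(z,\<omega>). ennreal z < h \<omega>} (z,\<omega>) :: ennreal"
  have meas: "case_prod ?f \<in> borel_measurable (lborel \<Otimes>\<^sub>M N)"
    by measurable
  have "(\<integral>\<^sup>+z. indicator {0..} z * emeasure N {\<omega>\<in>space N. ennreal z < h \<omega>} \<partial>lborel)
      = (\<integral>\<^sup>+z. (\<integral>\<^sup>+\<omega>. ?f z \<omega> \<partial>N) \<partial>lborel)"
  proof (intro nn_integral_cong)
    fix z :: real
    have "(\<integral>\<^sup>+\<omega>. ?f z \<omega> \<partial>N) = indicator {0..} z * (\<integral>\<^sup>+\<omega>. indicator {\<omega>\<in>space N. ennreal z < h \<omega>} \<omega> \<partial>N)"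
      by (subst nn_integral_cmult[symmetric]) (auto intro!: nn_integral_cong simp: indicator_def)
    also have "\<dots> = indicator {0..} z * emeasure N {\<omega>\<in>space N. ennreal z < h \<omega>}"
      by (subst nn_integral_indicator) auto
    finally show "indicator {0..} z * emeasure N {\<omega>\<in>space N. ennreal z < h \<omega>} = (\<integral>\<^sup>+\<omega>. ?f z \<omega> \<partial>N)" by simp
  qed
  also have "\<dots> = (\<integral>\<^sup>+\<omega>. (\<integral>\<^sup>+z. ?f z \<omega> \<partial>lborel) \<partial>N)"
    using P.Fubini'[OF meas] by simp
  also have "\<dots> = (\<integral>\<^sup>+\<omega>. h \<omega> \<partial>N)"
  proof (intro nn_integral_cong)
    fix \<omega>
    have "(\<integral>\<^sup>+z. ?f z \<omega> \<partial>lborel) = (\<integral>\<^sup>+z. indicator ({(0::real)..} \<inter> {z. ennreal z < h \<omega>}) z \<partial>lborel)"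
      by (intro nn_integral_cong) (auto simp: indicator_def)
    also have "\<dots> = h \<omega>"
      by (subst nn_integral_indicator) (auto simp: lborel_below)
    finally show "(\<integral>\<^sup>+z. ?f z \<omega> \<partial>lborel) = h \<omega>" .
  qed
  finally show ?thesis by simp
qed



locale setting =
  fixes M \<mu> :: "'a measure"
  assumes finM: "finite_measure M"
    and sets_mu: "sets \<mu> = sets M" and fin_mu: "finite_measure \<mu>"
    and ac: "absolutely_continuous M \<mu>"
begin

interpretation M: finite_measure M by (rule finM)

abbreviation "h \<equiv> RN_deriv M \<mu>"
definition "G z = measure M {\<omega>\<in>space M. ennreal z < h \<omega>}"

lemma dens: "density M h = \<mu>"
  using M.density_RN_deriv[OF ac sets_mu] .

lemma G_eq: "measure M (space M) - Fdist M \<mu> z = G z"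
proof -
  have "{\<omega>\<in>space M. ennreal z < h \<omega>} = space M - {\<omega>\<in>space M. h \<omega> \<le> ennreal z}"
    by auto
  then show ?thesis unfolding G_def Fdist_def
    by (simp add: M.finite_measure_compl)
qed

lemma G_nonneg: "0 \<le> G z" by (simp add: G_def)

lemma G_anti: "z1 \<le> z2 \<Longrightarrow> G z2 \<le> G z1"
  unfolding G_def
proof (rule M.finite_measure_mono)
  assume "z1 \<le> z2"
  then have "ennreal z1 \<le> ennreal z2" by (rule ennreal_leI)
  then show "{\<omega> \<in> space M. ennreal z2 < h \<omega>} \<subseteq> {\<omega> \<in> space M. ennreal z1 < h \<omega>}"
    by (auto intro: order.strict_trans1)
qed measurable

lemma G_meas[measurable]: "G \<in> borel_measurable borel"
proof -
  have "mono (\<lambda>z. - G z)" by (auto simp: mono_def intro: G_anti)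
  then have "(\<lambda>z. - G z) \<in> borel_measurable borel" by (rule borel_measurable_mono)
  then have "(\<lambda>z. - (- G z)) \<in> borel_measurable borel" by measurable
  then show ?thesis by simp
qed

lemma emeasure_G: "emeasure M {\<omega>\<in>space M. ennreal z < h \<omega>} = ennreal (G z)"
  unfolding G_def by (simp add: M.emeasure_eq_measure)

lemma intG: "(\<integral>\<^sup>+z. ennreal (indicator {0..} z * G z) \<partial>lborel) = emeasure \<mu> (space M)"
proof -
  have "(\<integral>\<^sup>+z. ennreal (indicator {0..} z * G z) \<partial>lborel) =
      (\<integral>\<^sup>+z. indicator {0..} z * emeasure M {\<omega>\<in>space M. ennreal z < h \<omega>} \<partial>lborel)"
    by (intro nn_integral_cong) (auto simp: emeasure_G indicator_def)
  also have "\<dots> = (\<integral>\<^sup>+\<omega>. h \<omega> \<partial>M)"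
    by (rule layer_cake[symmetric]) (auto simp: M.sigma_finite_measure_axioms)
  also have "\<dots> = emeasure (density M h) (space M)"
    by (subst emeasure_density) (auto intro!: nn_integral_cong)
  finally show ?thesis using dens by simp
qed

lemma intG_fin: "(\<integral>\<^sup>+z. ennreal (indicator {0..} z * G z) \<partial>lborel) < \<infinity>"
proof -
  interpret mu: finite_measure \<mu> by (rule fin_mu)
  show ?thesis using intG by (simp add: less_top[symmetric])
qed

lemma GI:
  assumes f[measurable]: "f \<in> borel_measurable borel" and b: "\<And>z. 0 \<le> z \<Longrightarrow> 0 \<le> f z \<and> f z \<le> G z"
  shows "set_integrable lborel {0..} f"
    and "ennreal (\<integral>z\<in>{0..}. f z \<partial>lborel) = (\<integral>\<^sup>+z. ennreal (indicator {0..} z * f z) \<partial>lborel)"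
proof -
  have "(\<integral>\<^sup>+z. ennreal (norm (indicator {0..} z *\<^sub>R f z)) \<partial>lborel)
      \<le> (\<integral>\<^sup>+z. ennreal (indicator {0..} z * G z) \<partial>lborel)"
  proof (intro nn_integral_mono)
    fix z :: real
    show "ennreal (norm (indicator {0..} z *\<^sub>R f z)) \<le> ennreal (indicator {0..} z * G z)"
    proof (cases "0 \<le> z")
      case True
      then show ?thesis using b[OF True] by (intro ennreal_leI) simp
    qed simp
  qed
  then have "(\<integral>\<^sup>+z. ennreal (norm (indicator {0..} z *\<^sub>R f z)) \<partial>lborel) < \<infinity>"
    using intG_fin by (meson order.strict_trans1)
  then show si: "set_integrable lborel {0..} f"
    unfolding set_integrable_def by (intro integrableI_bounded) auto
  have "(\<integral>\<^sup>+z. ennreal (indicator {0..} z *\<^sub>R f z) \<partial>lborel) = ennreal (integral\<^sup>L lborel (\<lambda>z. indicator {0..} z *\<^sub>R f z))"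
    using si unfolding set_integrable_def
    by (intro nn_integral_eq_integral) (auto simp: indicator_def b)
  then show "ennreal (\<integral>z\<in>{0..}. f z \<partial>lborel) = (\<integral>\<^sup>+z. ennreal (indicator {0..} z * f z) \<partial>lborel)"
    unfolding set_lebesgue_integral_def by simp
qed

abbreviation "v \<equiv> v_mu M \<mu>"

lemma v_def': "v A = (\<integral>z\<in>{0..}. min (G z) (measure M A) \<partial>lborel)"
  unfolding v_mu_def G_eq ..

lemma v_int: "set_integrable lborel {0..} (\<lambda>z. min (G z) (measure M A))"
  and v_nn: "ennreal (v A) = (\<integral>\<^sup>+z. ennreal (indicator {0..} z * min (G z) (measure M A)) \<partial>lborel)"
  using GI[of "\<lambda>z. min (G z) (measure M A)"] unfolding v_def' by (auto simp: G_nonneg)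

lemma v_nonneg: "0 \<le> v A"
  unfolding v_def' set_lebesgue_integral_def by (intro integral_nonneg_AE AE_I2) (auto simp: G_nonneg indicator_def)

end


context setting
begin

interpretation M: finite_measure M by (rule finM)

lemma v_mono: "measure M A \<le> measure M B \<Longrightarrow> v A \<le> v B"
proof -
  assume "measure M A \<le> measure M B"
  then have "ennreal (v A) \<le> ennreal (v B)"
    unfolding v_nn by (intro nn_integral_mono ennreal_leI) (auto simp: indicator_def)
  then show ?thesis using v_nonneg by (simp add: ennreal_le_iff)
qed

lemma v_empty: "v {} = 0"
proof -
  have "ennreal (v {}) = 0" unfolding v_nn by (simp add: G_nonneg)
  then show ?thesis using v_nonneg[of "{}"] by simp
qed

lemma submod_pt:
  fixes g a b u w :: real
  assumes "0 \<le> g" "a + b = u + w" "w \<le> a" "w \<le> b" "a \<le> u" "b \<le> u"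
  shows "min g u + min g w \<le> min g a + min g b"
  using assms by (auto simp: min_def)

lemma v_submod:
  assumes A: "A \<in> sets M" and B: "B \<in> sets M"
  shows "v (A \<union> B) + v (A \<inter> B) \<le> v A + v B"
proof -
  have eq: "measure M A + measure M B = measure M (A \<union> B) + measure M (A \<inter> B)"
  proof -
    have "ennreal (measure M A + measure M B) = ennreal (measure M (A \<union> B) + measure M (A \<inter> B))"
      using emeasure_Un_Int[OF A B] by (simp add: M.emeasure_eq_measure ennreal_plus[symmetric] del: ennreal_plus)
    then show ?thesis by (metis ennreal_inj add_nonneg_nonneg measure_nonneg)
  qed
  have m: "measure M (A \<inter> B) \<le> measure M A" "measure M (A \<inter> B) \<le> measure M B"
    "measure M A \<le> measure M (A \<union> B)" "measure M B \<le> measure M (A \<union> B)"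
    using A B by (auto intro!: M.finite_measure_mono)
  have "ennreal (v (A \<union> B) + v (A \<inter> B)) = ennreal (v (A \<union> B)) + ennreal (v (A \<inter> B))"
    using v_nonneg by (simp add: ennreal_plus)
  also have "\<dots> = (\<integral>\<^sup>+z. ennreal (indicator {0..} z * min (G z) (measure M (A \<union> B)))
       + ennreal (indicator {0..} z * min (G z) (measure M (A \<inter> B))) \<partial>lborel)"
    unfolding v_nn by (subst nn_integral_add) auto
  also have "\<dots> \<le> (\<integral>\<^sup>+z. ennreal (indicator {0..} z * min (G z) (measure M A))
       + ennreal (indicator {0..} z * min (G z) (measure M B)) \<partial>lborel)"
  proof (intro nn_integral_mono)
    fix z
    show "ennreal (indicator {0..} z * min (G z) (measure M (A \<union> B)))
       + ennreal (indicator {0..} z * min (G z) (measure M (A \<inter> B))) \<le>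
       ennreal (indicator {0..} z * min (G z) (measure M A))
       + ennreal (indicator {0..} z * min (G z) (measure M B))"
      using submod_pt[OF G_nonneg eq m(1,2,3,4)] G_nonneg[of z]
      by (auto simp: indicator_def ennreal_plus[symmetric] simp del: ennreal_plus intro!: ennreal_leI)
  qed
  also have "\<dots> = ennreal (v A) + ennreal (v B)"
    unfolding v_nn by (subst nn_integral_add) auto
  also have "\<dots> = ennreal (v A + v B)"
    using v_nonneg by (simp add: ennreal_plus)
  finally have "ennreal (v (A \<union> B) + v (A \<inter> B)) \<le> ennreal (v A + v B)" .
  then show ?thesis by (metis ennreal_le_iff add_nonneg_nonneg v_nonneg)
qed

end


context setting
begin

interpretation M: finite_measure M by (rule finM)

lemma Fdist_compl: "measure M (space M) - Fdist M N z = measure M {\<omega>\<in>space M. ennreal z < RN_deriv M N \<omega>}"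
proof -
  have "{\<omega>\<in>space M. ennreal z < RN_deriv M N \<omega>} = space M - {\<omega>\<in>space M. RN_deriv M N \<omega> \<le> ennreal z}"
    by auto
  then show ?thesis unfolding Fdist_def
    by (simp add: M.finite_measure_compl)
qed

lemma G_max: "min (G z) (G y) = G (max z y)"
  using G_anti[of z y] G_anti[of y z] by (cases "z \<le> y") (auto simp: max_def min_def)

lemma v_level:
  assumes y: "0 \<le> y"
  shows "v {\<omega>\<in>space M. ennreal y < h \<omega>} = measure \<mu> {\<omega>\<in>space M. ennreal y < h \<omega>}"
proof -
  interpret mu: finite_measure \<mu> by (rule fin_mu)
  let ?B = "{\<omega>\<in>space M. ennreal y < h \<omega>}"
  have Bs[measurable]: "?B \<in> sets M" by measurable
  have mB: "measure M ?B = G y" by (simp add: G_def)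
  have "emeasure \<mu> ?B = emeasure (density M h) ?B" using dens by simp
  also have "\<dots> = (\<integral>\<^sup>+\<omega>. h \<omega> * indicator ?B \<omega> \<partial>M)"
    by (rule emeasure_density) auto
  also have "\<dots> = (\<integral>\<^sup>+z. indicator {0..} z * emeasure M {\<omega>\<in>space M. ennreal z < h \<omega> * indicator ?B \<omega>} \<partial>lborel)"
    by (rule layer_cake) (auto simp: M.sigma_finite_measure_axioms)
  also have "\<dots> = (\<integral>\<^sup>+z. ennreal (indicator {0..} z * min (G z) (measure M ?B)) \<partial>lborel)"
  proof (intro nn_integral_cong)
    fix z :: real
    show "indicator {0..} z * emeasure M {\<omega>\<in>space M. ennreal z < h \<omega> * indicator ?B \<omega>} =
        ennreal (indicator {0..} z * min (G z) (measure M ?B))"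
    proof (cases "0 \<le> z")
      case True
      have "{\<omega>\<in>space M. ennreal z < h \<omega> * indicator ?B \<omega>} = {\<omega>\<in>space M. ennreal (max z y) < h \<omega>}"
      proof -
        have "ennreal z < h \<omega> \<and> ennreal y < h \<omega> \<longleftrightarrow> ennreal (max z y) < h \<omega>" for \<omega>
          by (cases "z \<le> y") (auto simp: max_def intro: le_less_trans[OF ennreal_leI], meson ennreal_leI le_less_trans linorder_le_cases)
        then show ?thesis by (auto simp: indicator_def)
      qed
      then have "emeasure M {\<omega>\<in>space M. ennreal z < h \<omega> * indicator ?B \<omega>} = ennreal (min (G z) (measure M ?B))"
        by (simp add: emeasure_G mB G_max)
      then show ?thesis using True by simp
    qed simp
  qed
  also have "\<dots> = ennreal (v ?B)" by (rule v_nn[symmetric])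
  finally have "ennreal (v ?B) = ennreal (measure \<mu> ?B)"
    by (simp add: mu.emeasure_eq_measure)
  then show ?thesis using v_nonneg by simp
qed

lemma mu'_le:
  assumes m': "\<mu>' \<in> same_F_measures M \<mu>" and A[measurable]: "A \<in> sets M"
  shows "emeasure \<mu>' A \<le> ennreal (v A)"
proof -
  let ?h = "RN_deriv M \<mu>'"
  have s': "sets \<mu>' = sets M" and ac': "absolutely_continuous M \<mu>'"
    and FF: "\<And>y. 0 \<le> y \<Longrightarrow> Fdist M \<mu>' y = Fdist M \<mu> y"
    using m' by (auto simp: same_F_measures_def)
  have d': "density M ?h = \<mu>'" using M.density_RN_deriv[OF ac' s'] .
  have "emeasure \<mu>' A = emeasure (density M ?h) A" using d' by simp
  also have "\<dots> = (\<integral>\<^sup>+\<omega>. ?h \<omega> * indicator A \<omega> \<partial>M)"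
    by (rule emeasure_density) auto
  also have "\<dots> = (\<integral>\<^sup>+z. indicator {0..} z * emeasure M {\<omega>\<in>space M. ennreal z < ?h \<omega> * indicator A \<omega>} \<partial>lborel)"
    by (rule layer_cake) (auto simp: M.sigma_finite_measure_axioms)
  also have "\<dots> \<le> (\<integral>\<^sup>+z. ennreal (indicator {0..} z * min (G z) (measure M A)) \<partial>lborel)"
  proof (intro nn_integral_mono)
    fix z :: real
    show "indicator {0..} z * emeasure M {\<omega>\<in>space M. ennreal z < ?h \<omega> * indicator A \<omega>} \<le>
        ennreal (indicator {0..} z * min (G z) (measure M A))"
    proof (cases "0 \<le> z")
      case True
      have eqs: "{\<omega>\<in>space M. ennreal z < ?h \<omega> * indicator A \<omega>} = {\<omega>\<in>space M. ennreal z < ?h \<omega>} \<inter> A"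
        by (auto simp: indicator_def)
      have "measure M {\<omega>\<in>space M. ennreal z < ?h \<omega>} = G z"
        using Fdist_compl[of \<mu>' z] FF[OF True] G_eq[of z] by simp
      then have e1: "emeasure M {\<omega>\<in>space M. ennreal z < ?h \<omega>} = ennreal (G z)"
        by (simp add: M.emeasure_eq_measure)
      have "emeasure M ({\<omega>\<in>space M. ennreal z < ?h \<omega>} \<inter> A) \<le> emeasure M {\<omega>\<in>space M. ennreal z < ?h \<omega>}"
        by (intro emeasure_mono) auto
      moreover have "emeasure M ({\<omega>\<in>space M. ennreal z < ?h \<omega>} \<inter> A) \<le> emeasure M A"
        by (intro emeasure_mono) auto
      ultimately have "emeasure M ({\<omega>\<in>space M. ennreal z < ?h \<omega>} \<inter> A) \<le> min (ennreal (G z)) (ennreal (measure M A))"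
        using e1 M.emeasure_eq_measure[of A] by (metis min.boundedI)
      then show ?thesis using True eqs by (simp add: min_ennreal G_nonneg)
    qed simp
  qed
  also have "\<dots> = ennreal (v A)" by (rule v_nn[symmetric])
  finally show ?thesis .
qed

lemma fun_le:
  assumes m': "\<mu>' \<in> same_F_measures M \<mu>" and f[measurable]: "f \<in> borel_measurable M"
    and nn: "\<forall>\<omega>\<in>space M. 0 \<le> f \<omega>"
  shows "(\<integral>\<^sup>+\<omega>. ennreal (f \<omega>) \<partial>\<mu>') \<le> v_fun M v f"
proof -
  have s': "sets \<mu>' = sets M" and fin': "finite_measure \<mu>'"
    using m' by (auto simp: same_F_measures_def)
  interpret m': finite_measure \<mu>' by (rule fin')
  have sp: "space \<mu>' = space M" using sets_eq_imp_space_eq[OF s'] .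
  have "f \<in> borel_measurable \<mu>'"
    by (subst measurable_cong_sets[OF s' refl]) (rule f)
  then have f': "(\<lambda>\<omega>. ennreal (f \<omega>)) \<in> borel_measurable \<mu>'" by measurable
  have "(\<integral>\<^sup>+\<omega>. ennreal (f \<omega>) \<partial>\<mu>') =
      (\<integral>\<^sup>+z. indicator {0..} z * emeasure \<mu>' {\<omega>\<in>space \<mu>'. ennreal z < ennreal (f \<omega>)} \<partial>lborel)"
    by (rule layer_cake[OF _ f']) (auto simp: m'.sigma_finite_measure_axioms)
  also have "\<dots> \<le> (\<integral>\<^sup>+z. ennreal (v {\<omega>\<in>space M. f \<omega> > z}) * indicator {0..} z \<partial>lborel)"
  proof (intro nn_integral_mono)
    fix z :: real
    show "indicator {0..} z * emeasure \<mu>' {\<omega>\<in>space \<mu>'. ennreal z < ennreal (f \<omega>)} \<le>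
        ennreal (v {\<omega>\<in>space M. f \<omega> > z}) * indicator {0..} z"
    proof (cases "0 \<le> z")
      case True
      have "{\<omega>\<in>space \<mu>'. ennreal z < ennreal (f \<omega>)} = {\<omega>\<in>space M. f \<omega> > z}"
        using True by (auto simp: sp ennreal_less_iff)
      moreover have "emeasure \<mu>' {\<omega>\<in>space M. f \<omega> > z} \<le> ennreal (v {\<omega>\<in>space M. f \<omega> > z})"
        by (rule mu'_le[OF m']) measurable
      ultimately show ?thesis using True by simp
    qed simp
  qed
  also have "\<dots> = v_fun M v f" unfolding v_fun_def by simp
  finally show ?thesis .
qed

end


lemma CR1: "chain_rep I n C D \<Longrightarrow> j < n \<Longrightarrow> i < j \<Longrightarrow> C j \<subseteq> D i"
proof (induction j)
  case 0 then show ?case by simp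
next
  case (Suc j)
  have a: "C (Suc j) \<subseteq> D j" using Suc.prems(1,2) by (simp add: chain_rep_def)
  show ?case
  proof (cases "i = j")
    case True then show ?thesis using a by simp
  next
    case False
    then have "i < j" using Suc.prems(3) by simp
    then have "C j \<subseteq> D i" using Suc.IH Suc.prems(1,2) by simp
    moreover have "D j \<subseteq> C j" using Suc.prems(1,2) by (simp add: chain_rep_def)
    ultimately show ?thesis using a by blast
  qed
qed

lemma CR2: "chain_rep I n C D \<Longrightarrow> j < n \<Longrightarrow> i \<le> j \<Longrightarrow> D j \<subseteq> D i"
proof -
  assume a: "chain_rep I n C D" "j < n" "i \<le> j"
  show ?thesis
  proof (cases "i = j")
    case False
    then have "C j \<subseteq> D i" using CR1[OF a(1,2)] a(3) by simp
    moreover have "D j \<subseteq> C j" using a by (simp add: chain_rep_def)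
    ultimately show ?thesis by blast
  qed simp
qed

lemma CR3: "chain_rep I n C D \<Longrightarrow> j < n \<Longrightarrow> i \<le> j \<Longrightarrow> C j \<subseteq> C i"
proof -
  assume a: "chain_rep I n C D" "j < n" "i \<le> j"
  show ?thesis
  proof (cases "i = j")
    case False
    then have "C j \<subseteq> D i" using CR1[OF a(1,2)] a(3) by simp
    moreover have "D i \<subseteq> C i" using a by (simp add: chain_rep_def)
    ultimately show ?thesis by blast
  qed simp
qed

lemma CR_in: "chain_rep I n C D \<Longrightarrow> i < n \<Longrightarrow> C i \<in> I \<and> D i \<in> I \<and> D i \<subseteq> C i"
  by (simp add: chain_rep_def)

locale chainI = setting +
  fixes I
  assumes Isets: "I \<subseteq> sets M"
    and Ichain: "\<forall>A\<in>I. \<forall>B\<in>I. A \<subseteq> B \<or> B \<subseteq> A"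
    and Iempty: "{} \<in> I" and Ispace: "space M \<in> I"
begin

interpretation M: finite_measure M by (rule finM)

definition "U (n::nat) (C::nat \<Rightarrow> 'a set) (D::nat \<Rightarrow> 'a set) = (\<Union>i<n. {measure M (D i)<..measure M (C i)})"

lemma K:
  assumes CI: "C \<in> I" "D \<in> I" "H \<in> I" "L \<in> I"
    and dj: "(C - D) \<inter> (H - L) = {}"
    and x: "measure M D < x" "measure M L < x" "x \<le> measure M C" "x \<le> measure M H"
  shows False
proof -
  have sub: "C \<inter> H \<subseteq> D \<union> L" using dj by blast
  have S: "C \<in> sets M" "D \<in> sets M" "H \<in> sets M" "L \<in> sets M" using CI Isets by auto
  have a: "x \<le> measure M (C \<inter> H)"
  proof (cases "C \<subseteq> H")
    case True then have "C \<inter> H = C" by blast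
    then show ?thesis using x by simp
  next
    case False then have "H \<subseteq> C" using Ichain CI by blast
    then have "C \<inter> H = H" by blast
    then show ?thesis using x by simp
  qed
  have b: "measure M (D \<union> L) < x"
  proof (cases "D \<subseteq> L")
    case True then have "D \<union> L = L" by blast
    then show ?thesis using x by simp
  next
    case False then have "L \<subseteq> D" using Ichain CI by blast
    then have "D \<union> L = D" by blast
    then show ?thesis using x by simp
  qed
  have "measure M (C \<inter> H) \<le> measure M (D \<union> L)"
    using sub S by (intro M.finite_measure_mono) auto
  then show False using a b by simp
qed

lemma gap:
  assumes R: "chain_rep I m C D" and xU: "x \<notin> U m C D" and x0: "0 < x"
    and xO: "x \<le> measure M (space M)"
  shows "\<exists>H\<in>I. \<exists>L\<in>I. (\<Union>j<m. C j - D j) \<inter> (H - L) = {} \<and> measure M L < x \<and> x \<le> measure M H"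
proof -
  define j where "j = (LEAST k. m \<le> k \<or> measure M (C k) < x)"
  have Pj: "m \<le> j \<or> measure M (C j) < x" unfolding j_def by (rule LeastI[of _ m]) simp
  have jm: "j \<le> m" unfolding j_def by (rule Least_le) simp
  have below: "k < m \<and> x \<le> measure M (C k)" if "k < j" for k
    using not_less_Least[OF that[unfolded j_def]] by auto
  have belowD: "x \<le> measure M (D k)" if "k < j" for k
  proof -
    have "k < m" "x \<le> measure M (C k)" using below[OF that] by auto
    moreover have "x \<notin> {measure M (D k)<..measure M (C k)}" using xU \<open>k < m\<close> unfolding U_def by blast
    ultimately show ?thesis by auto
  qed
  define H where "H = (if j = 0 then space M else D (j - 1))"
  define L where "L = (if j < m then C j else {})"
  have HI: "H \<in> I" unfolding H_def using Ispace CR_in[OF R, of "j - 1"] jm by auto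
  have LI: "L \<in> I" unfolding L_def using Iempty CR_in[OF R, of j] by auto
  have Lx: "measure M L < x" unfolding L_def using Pj x0 by auto
  have Hx: "x \<le> measure M H" unfolding H_def using xO belowD[of "j - 1"] by auto
  have dj: "(\<Union>j<m. C j - D j) \<inter> (H - L) = {}"
  proof (rule ccontr)
    assume "(\<Union>j<m. C j - D j) \<inter> (H - L) \<noteq> {}"
    then obtain k \<omega> where k: "k < m" "\<omega> \<in> C k" "\<omega> \<notin> D k" "\<omega> \<in> H" "\<omega> \<notin> L" by blast
    show False
    proof (cases "k < j")
      case True
      then have "j \<noteq> 0" by simp
      then have "\<omega> \<in> D (j - 1)" using k(4) unfolding H_def by simp
      moreover have "D (j - 1) \<subseteq> D k" using CR2[OF R, of "j - 1" k] True jm by simp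
      ultimately show False using k(3) by blast
    next
      case False
      then have "j < m" using k(1) by simp
      then have "L = C j" unfolding L_def by simp
      moreover have "C k \<subseteq> C j" using CR3[OF R k(1)] False by simp
      ultimately show False using k(2,5) by blast
    qed
  qed
  show ?thesis using HI LI dj Lx Hx by blast
qed

lemma U_sub:
  assumes R: "chain_rep I n C D" and R': "chain_rep I m C' D'"
    and sub: "(\<Union>i<n. C i - D i) \<subseteq> (\<Union>j<m. C' j - D' j)"
  shows "U n C D \<subseteq> U m C' D'"
proof
  fix x assume "x \<in> U n C D"
  then obtain i where i: "i < n" "measure M (D i) < x" "x \<le> measure M (C i)" unfolding U_def by auto
  have Ci: "C i \<in> I" "D i \<in> I" using CR_in[OF R i(1)] by auto
  have x0: "0 < x" using i(2) measure_nonneg[of M "D i"] by linarith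
  have "measure M (C i) \<le> measure M (space M)"
    using Ci Isets by (intro M.finite_measure_mono) (auto dest: sets.sets_into_space)
  then have xO: "x \<le> measure M (space M)" using i(3) by simp
  show "x \<in> U m C' D'"
  proof (rule ccontr)
    assume "x \<notin> U m C' D'"
    from gap[OF R' this x0 xO] obtain H L where HL: "H \<in> I" "L \<in> I"
      "(\<Union>j<m. C' j - D' j) \<inter> (H - L) = {}" "measure M L < x" "x \<le> measure M H" by blast
    have "(C i - D i) \<inter> (H - L) = {}" using HL(3) sub i(1) by blast
    then show False using K[OF Ci HL(1,2)] i HL by blast
  qed
qed

lemma U_disj:
  assumes R: "chain_rep I n C D" and R': "chain_rep I m C' D'"
    and dj: "(\<Union>i<n. C i - D i) \<inter> (\<Union>j<m. C' j - D' j) = {}"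
  shows "U n C D \<inter> U m C' D' = {}"
proof (rule ccontr)
  assume "U n C D \<inter> U m C' D' \<noteq> {}"
  then obtain x where x: "x \<in> U n C D" "x \<in> U m C' D'" by blast
  from x(1) obtain i where i: "i < n" "measure M (D i) < x" "x \<le> measure M (C i)"
    unfolding U_def by auto
  from x(2) obtain j where j: "j < m" "measure M (D' j) < x" "x \<le> measure M (C' j)"
    unfolding U_def by auto
  have "(C i - D i) \<inter> (C' j - D' j) = {}" using dj i(1) j(1) by blast
  then show False using K[of "C i" "D i" "C' j" "D' j" x] CR_in[OF R i(1)] CR_in[OF R' j(1)] i j by blast
qed

lemma U_sets[measurable]: "U n C D \<in> sets lborel"
  unfolding U_def by (intro sets.finite_UN) auto

lemma meas_le: "chain_rep I n C D \<Longrightarrow> i < n \<Longrightarrow> j < n \<Longrightarrow> i < j \<Longrightarrow> measure M (C j) \<le> measure M (D i)"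
  using CR1[of I n C D j i] CR_in[of I n C D i] Isets by (intro M.finite_measure_mono) auto

lemma meas_DC: "chain_rep I n C D \<Longrightarrow> i < n \<Longrightarrow> measure M (D i) \<le> measure M (C i)"
  using CR_in[of I n C D i] Isets by (intro M.finite_measure_mono) auto

lemma P1:
  assumes R: "chain_rep I n C D"
  shows "emeasure lborel (U n C D \<inter> {..g}) = ennreal (\<Sum>i<n. min g (measure M (C i)) - min g (measure M (D i)))"
proof -
  let ?F = "\<lambda>i. {measure M (D i)<..measure M (C i)} \<inter> {..g}"
  have dj: "disjoint_family_on ?F {..<n}"
  proof (unfold disjoint_family_on_def, intro ballI impI)
    fix i j assume ij: "i \<in> {..<n}" "j \<in> {..<n}" "i \<noteq> j"
    show "?F i \<inter> ?F j = {}"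
    proof (cases "i < j")
      case True then show ?thesis using meas_le[OF R, of i j] ij by auto
    next
      case False then have "j < i" using ij by simp
      then show ?thesis using meas_le[OF R, of j i] ij by auto
    qed
  qed
  have one: "emeasure lborel (?F i) = ennreal (min g (measure M (C i)) - min g (measure M (D i)))" if "i < n" for i
  proof -
    have dc: "measure M (D i) \<le> measure M (C i)" using meas_DC[OF R that] .
    show ?thesis
    proof (cases "measure M (D i) \<le> min g (measure M (C i))")
      case True
      then have eq: "?F i = {measure M (D i)<..min g (measure M (C i))}" by auto
      have dg: "min g (measure M (D i)) = measure M (D i)" using True by (auto simp: min_def split: if_splits)
      have "emeasure lborel (?F i) = ennreal (min g (measure M (C i)) - measure M (D i))"
        using eq True by (simp add: min.commute)
      then show ?thesis using dg by simp
    next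
      case False
      then have "?F i = {}" by auto
      moreover have "min g (measure M (C i)) - min g (measure M (D i)) = 0"
        using False dc by (auto simp: min_def split: if_splits)
      ultimately show ?thesis by simp
    qed
  qed
  have "emeasure lborel (U n C D \<inter> {..g}) = emeasure lborel (\<Union>i\<in>{..<n}. ?F i)"
    unfolding U_def by (simp add: Int_UN_distrib2)
  also have "\<dots> = (\<Sum>i<n. emeasure lborel (?F i))"
    using dj by (intro sum_emeasure[symmetric]) auto
  also have "\<dots> = (\<Sum>i<n. ennreal (min g (measure M (C i)) - min g (measure M (D i))))"
    using one by simp
  also have "\<dots> = ennreal (\<Sum>i<n. min g (measure M (C i)) - min g (measure M (D i)))"
    using meas_DC[OF R] by (intro sum_ennreal) (auto simp: min_def intro: order.trans)
  finally show ?thesis .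
qed

lemma U_emeasure:
  assumes R: "chain_rep I n C D"
  shows "emeasure lborel (U n C D) = emeasure M (\<Union>i<n. C i - D i)"
proof -
  have djl: "disjoint_family_on (\<lambda>i. {measure M (D i)<..measure M (C i)}) {..<n}"
  proof (unfold disjoint_family_on_def, intro ballI impI)
    fix i j assume ij: "i \<in> {..<n}" "j \<in> {..<n}" "i \<noteq> j"
    show "{measure M (D i)<..measure M (C i)} \<inter> {measure M (D j)<..measure M (C j)} = {}"
    proof (cases "i < j")
      case True then show ?thesis using meas_le[OF R, of i j] ij by auto
    next
      case False then have "j < i" using ij by simp
      then show ?thesis using meas_le[OF R, of j i] ij by auto
    qed
  qed
  have djm: "disjoint_family_on (\<lambda>i. C i - D i) {..<n}"
  proof (unfold disjoint_family_on_def, intro ballI impI)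
    fix i j assume ij: "i \<in> {..<n}" "j \<in> {..<n}" "i \<noteq> j"
    show "(C i - D i) \<inter> (C j - D j) = {}"
    proof (cases "i < j")
      case True then show ?thesis using CR1[OF R, of j i] ij by auto
    next
      case False then have "j < i" using ij by simp
      then show ?thesis using CR1[OF R, of i j] ij by auto
    qed
  qed
  have S: "C i \<in> sets M" "D i \<in> sets M" "D i \<subseteq> C i" if "i < n" for i
    using CR_in[OF R that] Isets by auto
  have "emeasure lborel (U n C D) = (\<Sum>i<n. emeasure lborel {measure M (D i)<..measure M (C i)})"
    unfolding U_def using djl by (intro sum_emeasure[symmetric]) auto
  also have "\<dots> = (\<Sum>i<n. emeasure M (C i - D i))"
  proof (intro sum.cong refl)
    fix i assume "i \<in> {..<n}"
    then have i: "i < n" by simp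
    show "emeasure lborel {measure M (D i)<..measure M (C i)} = emeasure M (C i - D i)"
      using meas_DC[OF R i] S[OF i] by (simp add: M.emeasure_eq_measure M.finite_measure_Diff)
  qed
  also have "\<dots> = emeasure M (\<Union>i<n. C i - D i)"
    using djm S by (intro sum_emeasure) auto
  finally show ?thesis .
qed

end


lemma REP:
  assumes "X \<in> alg_gen I"
  shows "\<exists>n C D. chain_rep I n C D \<and> X = (\<Union>i<n. C i - D i) \<and> mu_vI w I X = (\<Sum>i<n. w (C i) - w (D i))"
proof -
  have ex: "\<exists>s. \<exists>n C D. chain_rep I n C D \<and> X = (\<Union>i<n. C i - D i) \<and> s = (\<Sum>i<n. w (C i) - w (D i))"
    using assms unfolding alg_gen_def by auto
  show ?thesis unfolding mu_vI_def by (rule someI_ex[OF ex])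
qed

context chainI
begin

interpretation M: finite_measure M by (rule finM)

lemma alg_sets: "X \<in> alg_gen I \<Longrightarrow> X \<in> sets M"
proof -
  assume "X \<in> alg_gen I"
  then obtain n C D where R: "chain_rep I n C D" and X: "X = (\<Union>i<n. C i - D i)"
    unfolding alg_gen_def by auto
  have "C i - D i \<in> sets M" if "i < n" for i using CR_in[OF R that] Isets by auto
  then show ?thesis unfolding X by (intro sets.finite_UN) auto
qed

lemma VAL:
  assumes R: "chain_rep I n C D"
  shows "0 \<le> (\<Sum>i<n. v (C i) - v (D i))"
    and "ennreal (\<Sum>i<n. v (C i) - v (D i)) = (\<integral>\<^sup>+z. ennreal (indicator {0..} z *
           (\<Sum>i<n. min (G z) (measure M (C i)) - min (G z) (measure M (D i)))) \<partial>lborel)"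
    and "(\<lambda>z. ennreal (indicator {0..} z *
           (\<Sum>i<n. min (G z) (measure M (C i)) - min (G z) (measure M (D i))))) \<in> borel_measurable lborel"
proof -
  define \<psi> where "\<psi> = (\<lambda>z. \<Sum>i<n. min (G z) (measure M (C i)) - min (G z) (measure M (D i)))"
  have \<psi>m[measurable]: "\<psi> \<in> borel_measurable borel" unfolding \<psi>_def by measurable
  then show "(\<lambda>z. ennreal (indicator {0..} z *
           (\<Sum>i<n. min (G z) (measure M (C i)) - min (G z) (measure M (D i))))) \<in> borel_measurable lborel"
    unfolding \<psi>_def[symmetric] by measurable
  show "0 \<le> (\<Sum>i<n. v (C i) - v (D i))"
    using meas_DC[OF R] by (intro sum_nonneg) (auto intro: v_mono)
  have \<psi>b: "0 \<le> \<psi> z \<and> \<psi> z \<le> G z" if "0 \<le> z" for z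
  proof
    show nn: "0 \<le> \<psi> z" unfolding \<psi>_def
      using meas_DC[OF R] by (intro sum_nonneg) (auto simp: min_def intro: order.trans)
    have "U n C D \<inter> {..G z} \<subseteq> {0..G z}"
      unfolding U_def by (auto intro: order.trans[OF measure_nonneg less_imp_le])
    then have "emeasure lborel (U n C D \<inter> {..G z}) \<le> emeasure lborel {0..G z}"
      by (intro emeasure_mono) auto
    then have "ennreal (\<psi> z) \<le> ennreal (G z)"
      unfolding \<psi>_def P1[OF R] using G_nonneg[of z] by simp
    then show "\<psi> z \<le> G z" using G_nonneg[of z] by simp
  qed
  have eqi: "v (C i) - v (D i) = (\<integral>z\<in>{0..}. min (G z) (measure M (C i)) - min (G z) (measure M (D i)) \<partial>lborel)" for i
    unfolding v_def' by (rule set_integral_diff(2)[OF v_int v_int, symmetric])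
  have "(\<Sum>i<n. v (C i) - v (D i)) = (\<integral>z\<in>{0..}. \<psi> z \<partial>lborel)"
  proof -
    let ?f = "\<lambda>i x. indicator {0..} x *\<^sub>R (min (G x) (measure M (C i)) - min (G x) (measure M (D i)))"
    have int: "integrable lborel (?f i)" for i
      using set_integral_diff(1)[OF v_int v_int] unfolding set_integrable_def .
    have "(\<Sum>i<n. integral\<^sup>L lborel (?f i)) = integral\<^sup>L lborel (\<lambda>x. \<Sum>i<n. ?f i x)"
      by (rule Bochner_Integration.integral_sum[symmetric]) (rule int)
    then show ?thesis
      unfolding eqi \<psi>_def set_lebesgue_integral_def by (simp only: scaleR_sum_right)
  qed
  then show "ennreal (\<Sum>i<n. v (C i) - v (D i)) = (\<integral>\<^sup>+z. ennreal (indicator {0..} z *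
           (\<Sum>i<n. min (G z) (measure M (C i)) - min (G z) (measure M (D i)))) \<partial>lborel)"
    using GI(2)[OF \<psi>m \<psi>b] unfolding \<psi>_def by simp
qed

end


context chainI
begin

interpretation M: finite_measure M by (rule finM)

lemma cont: "sigma_additive_on (alg_gen I) (mu_vI v I)"
  unfolding sigma_additive_on_def
proof (intro allI impI)
  fix A :: "nat \<Rightarrow> 'a set"
  assume rA: "range A \<subseteq> alg_gen I" and dA: "disjoint_family A" and uA: "(\<Union>n. A n) \<in> alg_gen I"
  have "\<forall>k. \<exists>R. chain_rep I (fst R) (fst (snd R)) (snd (snd R)) \<and>
      A k = (\<Union>i<fst R. fst (snd R) i - snd (snd R) i) \<and>
      mu_vI v I (A k) = (\<Sum>i<fst R. v (fst (snd R) i) - v (snd (snd R) i))"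
  proof
    fix k
    from REP[of "A k" I v] rA obtain n C D where
      "chain_rep I n C D" "A k = (\<Union>i<n. C i - D i)" "mu_vI v I (A k) = (\<Sum>i<n. v (C i) - v (D i))"
      by blast
    then show "\<exists>R. chain_rep I (fst R) (fst (snd R)) (snd (snd R)) \<and>
      A k = (\<Union>i<fst R. fst (snd R) i - snd (snd R) i) \<and>
      mu_vI v I (A k) = (\<Sum>i<fst R. v (fst (snd R) i) - v (snd (snd R) i))"
      by (intro exI[of _ "(n, C, D)"]) simp
  qed
  from choice[OF this] obtain Rf where Rf: "\<forall>k. chain_rep I (fst (Rf k)) (fst (snd (Rf k))) (snd (snd (Rf k))) \<and>
      A k = (\<Union>i<fst (Rf k). fst (snd (Rf k)) i - snd (snd (Rf k)) i) \<and>
      mu_vI v I (A k) = (\<Sum>i<fst (Rf k). v (fst (snd (Rf k)) i) - v (snd (snd (Rf k)) i))"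
    by blast
  define nk where "nk = (\<lambda>k. fst (Rf k))"
  define Ck where "Ck = (\<lambda>k. fst (snd (Rf k)))"
  define Dk where "Dk = (\<lambda>k. snd (snd (Rf k)))"
  have Rk: "chain_rep I (nk k) (Ck k) (Dk k)" for k
    using Rf unfolding nk_def Ck_def Dk_def by blast
  have Ak: "A k = (\<Union>i<nk k. Ck k i - Dk k i)" for k
    using Rf unfolding nk_def Ck_def Dk_def by blast
  have mk: "mu_vI v I (A k) = (\<Sum>i<nk k. v (Ck k i) - v (Dk k i))" for k
    using Rf unfolding nk_def Ck_def Dk_def by blast
  from REP[OF uA, of v] obtain n' C' D' where R': "chain_rep I n' C' D'"
    and A': "(\<Union>n. A n) = (\<Union>i<n'. C' i - D' i)" and m': "mu_vI v I (\<Union>n. A n) = (\<Sum>i<n'. v (C' i) - v (D' i))"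
    by blast
  define Uk where "Uk = (\<lambda>k. U (nk k) (Ck k) (Dk k))"
  define U' where "U' = U n' C' D'"
  have Asets: "A k \<in> sets M" for k using rA alg_sets by auto
  have sub: "Uk k \<subseteq> U'" for k
    unfolding Uk_def U'_def
    by (rule U_sub[OF Rk R']) (use Ak A' in blast)
  have disj: "disjoint_family Uk"
    unfolding disjoint_family_on_def
  proof (intro ballI impI)
    fix k l :: nat assume "k \<noteq> l"
    then have "A k \<inter> A l = {}" using dA unfolding disjoint_family_on_def by auto
    then show "Uk k \<inter> Uk l = {}" unfolding Uk_def
      by (intro U_disj[OF Rk Rk]) (simp add: Ak[symmetric])
  qed
  have eU: "emeasure lborel U' = emeasure lborel (\<Union>k. Uk k)"
  proof -
    have "emeasure lborel U' = emeasure M (\<Union>n. A n)"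
      unfolding U'_def U_emeasure[OF R'] A' ..
    also have "\<dots> = (\<Sum>k. emeasure M (A k))"
      using Asets dA by (intro suminf_emeasure[symmetric]) auto
    also have "\<dots> = (\<Sum>k. emeasure lborel (Uk k))"
      unfolding Uk_def U_emeasure[OF Rk] Ak[symmetric] ..
    also have "\<dots> = emeasure lborel (\<Union>k. Uk k)"
      using disj by (intro suminf_emeasure) (auto simp: Uk_def intro: U_sets[unfolded sets_lborel])
    finally show ?thesis .
  qed
  have finU: "emeasure lborel U' \<noteq> \<infinity>"
    unfolding U'_def U_emeasure[OF R'] by simp
  have Us: "U' \<in> sets borel" "\<And>k. Uk k \<in> sets borel"
    unfolding U'_def Uk_def by (auto intro: U_sets[unfolded sets_lborel])
  have null: "U' - (\<Union>k. Uk k) \<in> null_sets lborel"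
  proof -
    have "emeasure lborel (U' - (\<Union>k. Uk k)) = emeasure lborel U' - emeasure lborel (\<Union>k. Uk k)"
      using sub finU eU Us by (intro emeasure_Diff) auto
    also have "\<dots> = 0" using eU finU by simp
    finally show ?thesis using Us by (intro null_setsI) auto
  qed
  have pt: "(\<Sum>k. emeasure lborel (Uk k \<inter> {..g})) = emeasure lborel (U' \<inter> {..g})" for g
  proof -
    have "(\<Sum>k. emeasure lborel (Uk k \<inter> {..g})) = emeasure lborel (\<Union>k. Uk k \<inter> {..g})"
      using disj Us by (intro suminf_emeasure) (auto simp: disjoint_family_on_def)
    also have "\<dots> = emeasure lborel ((\<Union>k. Uk k \<inter> {..g}) \<union> ((U' - (\<Union>k. Uk k)) \<inter> {..g}))"
      using null Us by (intro emeasure_Un_null_set[symmetric] null_set_Int2) auto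
    also have "(\<Union>k. Uk k \<inter> {..g}) \<union> ((U' - (\<Union>k. Uk k)) \<inter> {..g}) = U' \<inter> {..g}"
      using sub by blast
    finally show ?thesis .
  qed
  have "(\<Sum>k. ennreal (mu_vI v I (A k))) = ennreal (mu_vI v I (\<Union>n. A n))"
  proof -
    have "(\<Sum>k. ennreal (mu_vI v I (A k))) = (\<Sum>k. (\<integral>\<^sup>+z. ennreal (indicator {0..} z *
           (\<Sum>i<nk k. min (G z) (measure M (Ck k i)) - min (G z) (measure M (Dk k i)))) \<partial>lborel))"
      unfolding mk VAL(2)[OF Rk] ..
    also have "\<dots> = (\<integral>\<^sup>+z. (\<Sum>k. ennreal (indicator {0..} z *
           (\<Sum>i<nk k. min (G z) (measure M (Ck k i)) - min (G z) (measure M (Dk k i))))) \<partial>lborel)"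
      by (intro nn_integral_suminf[symmetric] VAL(3)[OF Rk])
    also have "\<dots> = (\<integral>\<^sup>+z. ennreal (indicator {0..} z *
           (\<Sum>i<n'. min (G z) (measure M (C' i)) - min (G z) (measure M (D' i)))) \<partial>lborel)"
    proof (intro nn_integral_cong)
      fix z :: real
      show "(\<Sum>k. ennreal (indicator {0..} z *
           (\<Sum>i<nk k. min (G z) (measure M (Ck k i)) - min (G z) (measure M (Dk k i))))) =
          ennreal (indicator {0..} z * (\<Sum>i<n'. min (G z) (measure M (C' i)) - min (G z) (measure M (D' i))))"
      proof (cases "0 \<le> z")
        case True
        then show ?thesis
          using pt[of "G z"] unfolding Uk_def U'_def P1[OF Rk] P1[OF R'] by simp
      qed simp
    qed
    also have "\<dots> = ennreal (mu_vI v I (\<Union>n. A n))"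
      unfolding m' VAL(2)[OF R'] ..
    finally show ?thesis .
  qed
  moreover have "(\<lambda>k. ennreal (mu_vI v I (A k))) sums (\<Sum>k. ennreal (mu_vI v I (A k)))"
    by (rule summable_sums[OF summableI])
  ultimately have "(\<lambda>k. ennreal (mu_vI v I (A k))) sums ennreal (mu_vI v I (\<Union>n. A n))" by simp
  moreover have "0 \<le> mu_vI v I (A k)" for k unfolding mk by (rule VAL(1)[OF Rk])
  moreover have "0 \<le> mu_vI v I (\<Union>n. A n)" unfolding m' by (rule VAL(1)[OF R'])
  ultimately show "(\<lambda>n. mu_vI v I (A n)) sums mu_vI v I (\<Union>n. A n)"
    by (subst (asm) sums_ennreal) auto
qed

end


theorem theorem13:
  fixes M \<mu> :: "'a measure"
  assumes "Sigma_cls M \<noteq> {}"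
    and "finite_measure M"
    and "sets \<mu> = sets M" and "finite_measure \<mu>" and "absolutely_continuous M \<mu>"
  shows "(nondecreasing_cap M (v_mu M \<mu>) \<and> continuous_cap M (v_mu M \<mu>)
           \<and> submodular_cap M (v_mu M \<mu>) \<and> v_mu M \<mu> {} = 0)
    \<and> (\<forall>y\<ge>0. v_mu M \<mu> {\<omega>\<in>space M. RN_deriv M \<mu> \<omega> > ennreal y}
             = measure \<mu> {\<omega>\<in>space M. RN_deriv M \<mu> \<omega> > ennreal y})
    \<and> (\<forall>f. f \<in> borel_measurable M \<longrightarrow> (\<forall>\<omega>\<in>space M. f \<omega> \<ge> 0) \<longrightarrow>
           v_fun M (v_mu M \<mu>) f \<ge> (SUP \<mu>'\<in>same_F_measures M \<mu>. \<integral>\<^sup>+ \<omega>. ennreal (f \<omega>) \<partial>\<mu>'))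
    \<and> (\<forall>A\<in>sets M.
           ennreal (v_mu M \<mu> A) \<ge> (SUP \<mu>'\<in>same_F_measures M \<mu>. emeasure \<mu>' A))"
proof -
  have S: "setting M \<mu>" by (rule setting.intro[OF assms(2-5)])
  interpret setting M \<mu> by (rule S)
  interpret M: finite_measure M by (rule assms(2))
  have nd: "nondecreasing_cap M v"
    unfolding nondecreasing_cap_def
    by (auto intro!: v_mono M.finite_measure_mono)
  have ct: "continuous_cap M v"
    unfolding continuous_cap_def
  proof
    fix I assume "I \<in> Sigma_cls M"
    then interpret chainI M \<mu> I
      by (intro chainI.intro S chainI_axioms.intro) (auto simp: Sigma_cls_def)
    show "sigma_additive_on (alg_gen I) (mu_vI v I)" by (rule cont)
  qed
  have sm: "submodular_cap M v"
    unfolding submodular_cap_def using v_submod by auto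
  have p2: "\<forall>y\<ge>0. v {\<omega>\<in>space M. RN_deriv M \<mu> \<omega> > ennreal y}
             = measure \<mu> {\<omega>\<in>space M. RN_deriv M \<mu> \<omega> > ennreal y}"
    using v_level by auto
  have p3: "\<forall>f. f \<in> borel_measurable M \<longrightarrow> (\<forall>\<omega>\<in>space M. f \<omega> \<ge> 0) \<longrightarrow>
           v_fun M v f \<ge> (SUP \<mu>'\<in>same_F_measures M \<mu>. \<integral>\<^sup>+ \<omega>. ennreal (f \<omega>) \<partial>\<mu>')"
    by (auto intro!: SUP_least fun_le)
  have p4: "\<forall>A\<in>sets M. ennreal (v A) \<ge> (SUP \<mu>'\<in>same_F_measures M \<mu>. emeasure \<mu>' A)"
    by (auto intro!: SUP_least mu'_le)
  show ?thesis using nd ct sm v_empty p2 p3 p4 by blast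
qed



end
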